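(* Let $k\ge 2$ be fixed and let $0<\lambda_1<\lambda_2$ be fixed, with $\lambda\mapsto\beta(\lambda)$ continuous at $\lambda_1$. Then there is an integer $d$ such that \[ r\bigl(\lambda_2,d,\beta(\lambda_1)\bigr)\ \ge\ \beta(\lambda_1). \]
   Context: $X_\lambda$ is the Galton--Watson branching process started from a single particle $x_0$ in which each particle has a Poisson($\lambda$) number of children independently, viewed as a rooted tree; $\Pr_\lambda$ is its law. $\mathcal B_d$ is the event that $X_\lambda$ contains a $(k-1)$-ary tree of height $d$ rooted at $x_0$, $\mathcal B$ the event that it contains an infinite $(k-1)$-ary tree rooted at $x_0$, and $\beta(\lambda)=\Pr_\lambda(\mathcal B)$. $\mathcal R_d$ is the event that $\mathcal B_d$ still holds after deleting any single particle of generation $d$ (with its descendants). For $p\in[0,1]$, $r(\lambda,d,p)$ is the probability that $\mathcal R_d$ holds in $X_\lambda$ after deleting all unmarked particles of generation $d$, when, given $X_\lambda$, each particle of generation $d$ is marked independently with probability $p$. *)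

theory Defs
  imports "HOL-Probability.Probability"
begin

text \<open>Ulam--Harris encoding of the branching process.  Particles are labelled by
  lists of naturals; the root x0 is the empty list, and the i-th child of
  particle v is i # v, so the generation of v is length v.  A configuration
  N assigns to every label its (potential) number of children; the particle v
  is present iff every ancestor-edge index is below the parent's child count.\<close>

type_synonym label = "nat list"

fun alive :: "(label \<Rightarrow> nat) \<Rightarrow> label \<Rightarrow> bool" where
  "alive N [] = True"
| "alive N (i # v) = (alive N v \<and> i < N v)"

definition has_tree_height :: "(label \<Rightarrow> nat) \<Rightarrow> nat \<Rightarrow> nat \<Rightarrow> label set \<Rightarrow> bool" where
  "has_tree_height N k d D \<longleftrightarrow>
     (\<exists>S. [] \<in> S \<and>
          (\<forall>v\<in>S. alive N v \<and> length v \<le> d \<and> (\<forall>u. suffix u v \<longrightarrow> u \<notin> D)) \<and>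
          (\<forall>i v. i # v \<in> S \<longrightarrow> v \<in> S) \<and>
          (\<forall>v\<in>S. length v < d \<longrightarrow> card {i. i # v \<in> S} = k - 1))"

definition B_ev :: "(label \<Rightarrow> nat) \<Rightarrow> nat \<Rightarrow> nat \<Rightarrow> bool" where
  "B_ev N k d \<longleftrightarrow> has_tree_height N k d {}"

definition B_inf :: "(label \<Rightarrow> nat) \<Rightarrow> nat \<Rightarrow> bool" where
  "B_inf N k \<longleftrightarrow>
     (\<exists>S. [] \<in> S \<and> (\<forall>v\<in>S. alive N v) \<and>
          (\<forall>i v. i # v \<in> S \<longrightarrow> v \<in> S) \<and>
          (\<forall>v\<in>S. card {i. i # v \<in> S} = k - 1))"

text \<open>The event R_d in the tree obtained from N by first deleting the particles of
  D0 (particles of generation d): B_d holds, and still holds after deleting any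
  single (remaining) particle of generation d.\<close>
definition R_ev_del :: "(label \<Rightarrow> nat) \<Rightarrow> nat \<Rightarrow> nat \<Rightarrow> label set \<Rightarrow> bool" where
  "R_ev_del N k d D0 \<longleftrightarrow>
     has_tree_height N k d D0 \<and>
     (\<forall>w. alive N w \<and> length w = d \<and> w \<notin> D0 \<longrightarrow> has_tree_height N k d (insert w D0))"

definition GW :: "real \<Rightarrow> (label \<Rightarrow> nat) measure" where
  "GW lam = PiM UNIV (\<lambda>_. measure_pmf (poisson_pmf lam))"

definition beta :: "nat \<Rightarrow> real \<Rightarrow> real" where
  "beta k lam = measure (GW lam) {N \<in> space (GW lam). B_inf N k}"

text \<open>Joint law of X_lambda and independent Bernoulli(p) marks (marks of labels outside
  generation d are irrelevant).\<close>
definition MGW :: "real \<Rightarrow> real \<Rightarrow> (label \<Rightarrow> nat \<times> bool) measure" where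
  "MGW lam p = PiM UNIV (\<lambda>_. measure_pmf (pair_pmf (poisson_pmf lam) (bernoulli_pmf p)))"

definition r :: "nat \<Rightarrow> real \<Rightarrow> nat \<Rightarrow> real \<Rightarrow> real" where
  "r k lam d p = measure (MGW lam p)
     {\<omega> \<in> space (MGW lam p).
        R_ev_del (fst \<circ> \<omega>) k d {u. length u = d \<and> \<not> snd (\<omega> u)}}"

end

theory Submission
  imports Defs
begin

definition Pp :: "nat \<Rightarrow> real \<Rightarrow> real" where
  "Pp j x = exp (-x) * x ^ j / fact j"

definition Tt :: "nat \<Rightarrow> real \<Rightarrow> real" where
  "Tt K x = (\<Sum>j<K. Pp j x)"

lemma Pp_deriv: "(Pp (Suc j) has_real_derivative (Pp j x - Pp (Suc j) x)) (at x)"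
proof -
  have d: "((\<lambda>x. exp (-x) * x ^ Suc j) has_real_derivative
     ((- exp (-x)) * x ^ Suc j + exp (-x) * (of_nat (Suc j) * x ^ j))) (at x)"
    by (rule derivative_eq_intros refl | simp)+
  have "((\<lambda>x. exp (-x) * x ^ Suc j / fact (Suc j)) has_real_derivative
     ((- exp (-x)) * x ^ Suc j + exp (-x) * (of_nat (Suc j) * x ^ j)) / fact (Suc j)) (at x)"
    using DERIV_cdivide[OF d, of "fact (Suc j)"] by simp
  moreover have "((- exp (-x)) * x ^ Suc j + exp (-x) * (of_nat (Suc j) * x ^ j)) / fact (Suc j)
      = Pp j x - Pp (Suc j) x"
  proof -
    have f: "(fact (Suc j)::real) = of_nat (Suc j) * fact j" by (simp add: fact_Suc)
    have nz: "of_nat (Suc j) * fact j \<noteq> (0::real)" by simp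
    have "((- exp (-x)) * x ^ Suc j + exp (-x) * (of_nat (Suc j) * x ^ j)) / (of_nat (Suc j) * fact j)
       = exp (-x) * x ^ j / fact j - exp (-x) * x ^ Suc j / (of_nat (Suc j) * fact j)"
      using nz by (simp add: divide_simps)
    then show ?thesis unfolding Pp_def f .
  qed
  ultimately show ?thesis unfolding Pp_def[abs_def] by simp
qed

lemma Pp0_deriv: "(Pp 0 has_real_derivative (- Pp 0 x)) (at x)"
  unfolding Pp_def[abs_def] by (auto intro!: derivative_eq_intros)

lemma Tt_deriv: "(Tt (Suc n) has_real_derivative (- Pp n x)) (at x)"
proof (induction n)
  case 0
  then show ?case using Pp0_deriv by (simp add: Tt_def[abs_def])
next
  case (Suc n)
  have e: "Tt (Suc (Suc n)) = (\<lambda>x. Tt (Suc n) x + Pp (Suc n) x)"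
    by (auto simp: Tt_def)
  show ?case unfolding e
    using DERIV_add[OF Suc Pp_deriv[of n x]] by simp
qed

lemma Pp_pos: "x > 0 \<Longrightarrow> Pp j x > 0"
  unfolding Pp_def by simp

lemma Pp_nonneg: "x \<ge> 0 \<Longrightarrow> Pp j x \<ge> 0"
  unfolding Pp_def by simp

lemma Tt_cont: "continuous_on S (Tt K)"
  unfolding Tt_def[abs_def] Pp_def by (intro continuous_intros) auto

lemma Tt_isCont: "isCont (Tt K) x"
  unfolding Tt_def[abs_def] Pp_def by (intro continuous_intros) auto

lemma Tt_strict_anti:
  assumes "0 \<le> a" "a < b" "m \<ge> 1"
  shows "Tt m b < Tt m a"
proof -
  obtain n where m: "m = Suc n" using assms(3) by (cases m) auto
  show ?thesis unfolding m
  proof (rule DERIV_neg_imp_decreasing_open[OF assms(2)])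
    fix x assume "a < x" "x < b"
    then show "\<exists>y. DERIV (Tt (Suc n)) x :> y \<and> y < 0"
      using Tt_deriv[of n x] Pp_pos[of x n] assms(1) by auto
  qed (rule Tt_cont)
qed

lemma Tt_anti:
  assumes "0 \<le> a" "a \<le> b" "m \<ge> 1"
  shows "Tt m b \<le> Tt m a"
  using Tt_strict_anti[OF assms(1) _ assms(3), of b] assms(2)
  by (cases "a = b") auto

lemma Tt_zero: "m \<ge> 1 \<Longrightarrow> Tt m 0 = 1"
  unfolding Tt_def Pp_def
proof (induction m)
  case (Suc m) then show ?case by (cases m) auto
qed simp

lemma Tt_Suc: "Tt (Suc m) x = Tt m x + Pp m x"
  by (simp add: Tt_def)

definition Ee :: "nat \<Rightarrow> real \<Rightarrow> real" where
  "Ee n x = exp (-x) * x ^ Suc n / fact n"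

definition Dd :: "nat \<Rightarrow> real \<Rightarrow> real" where
  "Dd n x = Ee n x - (1 - Tt (Suc n) x)"

lemma Dd_deriv: "(Dd n has_real_derivative (exp (-x) * x ^ n * (real n - x) / fact n)) (at x)"
proof -
  have d: "((\<lambda>x. exp (-x) * x ^ Suc n) has_real_derivative
     ((- exp (-x)) * x ^ Suc n + exp (-x) * (of_nat (Suc n) * x ^ n))) (at x)"
    by (rule derivative_eq_intros refl | simp)+
  have d2: "(Ee n has_real_derivative
     ((- exp (-x)) * x ^ Suc n + exp (-x) * (of_nat (Suc n) * x ^ n)) / fact n) (at x)"
    using DERIV_cdivide[OF d, of "fact n"] unfolding Ee_def[abs_def] by simp
  have d3: "((\<lambda>x. 1 - Tt (Suc n) x) has_real_derivative (- (- Pp n x))) (at x)"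
    using DERIV_diff[OF DERIV_const[of 1] Tt_deriv[of n x]] by simp
  have "(Dd n has_real_derivative
     ((- exp (-x)) * x ^ Suc n + exp (-x) * (of_nat (Suc n) * x ^ n)) / fact n - (- (- Pp n x))) (at x)"
    using DERIV_diff[OF d2 d3] unfolding Dd_def[abs_def] by simp
  moreover have "((- exp (-x)) * x ^ Suc n + exp (-x) * (of_nat (Suc n) * x ^ n)) / fact n - (- (- Pp n x))
     = exp (-x) * x ^ n * (real n - x) / fact n"
    unfolding Pp_def by (simp add: divide_simps) (simp add: algebra_simps)
  ultimately show ?thesis by simp
qed

lemma Dd_zero: "Dd n 0 = 0"
  unfolding Dd_def Ee_def using Tt_zero[of "Suc n"] by simp

lemma Dd_cont: "continuous_on S (Dd n)"
  unfolding Dd_def[abs_def] Ee_def using Tt_cont[of S "Suc n"]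
  by (intro continuous_intros) auto

lemma Dd_pos:
  assumes "Dd n s \<ge> 0" "0 < x" "x < s"
  shows "Dd n x > 0"
proof (cases "x \<le> real n")
  case True
  have "Dd n 0 < Dd n x"
  proof (rule DERIV_pos_imp_increasing_open[OF assms(2)])
    fix y assume "0 < y" "y < x"
    then show "\<exists>z. DERIV (Dd n) y :> z \<and> z > 0"
      using Dd_deriv[of n y] True by (intro exI[of _ "exp (-y) * y ^ n * (real n - y) / fact n"]) auto
  qed (rule Dd_cont)
  then show ?thesis using Dd_zero by simp
next
  case False
  have "Dd n s < Dd n x"
  proof (rule DERIV_neg_imp_decreasing_open[OF assms(3)])
    fix y assume "x < y" "y < s"
    then have "exp (-y) * y ^ n * (real n - y) < 0"
      using False assms(2) by (intro mult_pos_neg) auto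
    then show "\<exists>z. DERIV (Dd n) y :> z \<and> z < 0"
      using Dd_deriv[of n y] by (intro exI[of _ "exp (-y) * y ^ n * (real n - y) / fact n"])
        (auto simp: divide_neg_pos)
  qed (rule Dd_cont)
  then show ?thesis using assms(1) by simp
qed

lemma h_incr:
  assumes "0 < a" "a < s" "Dd n s \<ge> 0"
  shows "(1 - Tt (Suc n) a) / a < (1 - Tt (Suc n) s) / s"
proof (rule DERIV_pos_imp_increasing_open[OF assms(2)])
  fix y assume y: "a < y" "y < s"
  have d3: "((\<lambda>x. 1 - Tt (Suc n) x) has_real_derivative (- (- Pp n y))) (at y)"
    using DERIV_diff[OF DERIV_const[of 1] Tt_deriv[of n y]] by simp
  have yp: "y \<noteq> 0" using y assms by auto
  have "((\<lambda>x. (1 - Tt (Suc n) x) / x) has_real_derivative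
     ((- (- Pp n y)) * y - (1 - Tt (Suc n) y) * 1) / (y * y)) (at y)"
    using DERIV_divide[OF d3 DERIV_ident yp] by simp
  moreover have "(- (- Pp n y)) * y - (1 - Tt (Suc n) y) * 1 = Dd n y"
    unfolding Dd_def Ee_def Pp_def by (simp add: algebra_simps)
  moreover have "Dd n y > 0" using Dd_pos[OF assms(3), of y] y assms by auto
  ultimately show "\<exists>z. DERIV (\<lambda>x. (1 - Tt (Suc n) x) / x) y :> z \<and> z > 0"
    using yp by (intro exI[of _ "Dd n y / (y * y)"]) (auto intro!: divide_pos_pos simp: zero_less_mult_iff)
next
  show "continuous_on {a..s} (\<lambda>x. (1 - Tt (Suc n) x) / x)"
    using assms Tt_cont[of "{a..s}" "Suc n"] by (intro continuous_intros) auto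
qed

lemma Pp_Ee: "Pp (Suc n) x * real (Suc n) = Ee n x"
proof -
  have nz: "real (Suc n) * fact n \<noteq> 0" by simp
  show ?thesis unfolding Pp_def Ee_def fact_Suc using nz
    by (simp add: divide_simps)
qed

lemma analysis_main:
  fixes n :: nat and l1 l2 b :: real and g rho :: "nat \<Rightarrow> real"
  assumes l1: "0 < l1" "l1 < l2" and b: "0 < b" "b \<le> 1 - Tt (Suc n) (l1 * b)"
    and g0: "g 0 = b" and gS: "\<And>d. g (Suc d) = 1 - Tt (Suc n) (l2 * g d)"
    and rS: "\<And>d. rho (Suc d) = 1 - Tt (Suc (Suc n)) (l2 * g d)
               + exp (-(l2 * g d)) * (l2 * rho d) ^ Suc n / fact (Suc n)"
    and rnn: "\<And>d. 0 \<le> rho d" and rle: "\<And>d. rho d \<le> g d" and gle1: "\<And>d. g d \<le> 1"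
  shows "\<exists>d. b \<le> rho d"
proof -
  have l2: "0 < l2" using l1 by simp
  have gnn: "g d \<ge> 0" for d using rnn[of d] rle[of d] by simp
  have g1: "g 1 > b"
  proof -
    have "Tt (Suc n) (l2 * b) < Tt (Suc n) (l1 * b)"
      using l1 b by (intro Tt_strict_anti) auto
    then show ?thesis using gS[of 0] g0 b by simp
  qed
  have gstep: "g d \<le> g (Suc d)" for d
  proof (induction d)
    case 0 then show ?case using g1 g0 by simp
  next
    case (Suc d)
    have "Tt (Suc n) (l2 * g (Suc d)) \<le> Tt (Suc n) (l2 * g d)"
      using Suc l2 gnn[of d] by (intro Tt_anti) (auto intro: mult_left_mono)
    then show ?case using gS[of d] gS[of "Suc d"] by simp
  qed
  have inc: "incseq g" using gstep by (simp add: incseq_SucI)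
  define G where "G = (SUP d. g d)"
  have lim: "g \<longlonglongrightarrow> G" unfolding G_def
    using inc gle1 by (intro LIMSEQ_incseq_SUP) (auto intro!: bdd_aboveI[of _ 1])
  have gleG: "g d \<le> G" for d using incseq_le[OF inc lim] .
  have Gb: "G > b" using gleG[of 1] g1 by simp
  have gb: "g d \<ge> b" for d using inc g0 by (metis incseq_def zero_le)
  have gfix: "1 - Tt (Suc n) (l2 * G) = G"
  proof -
    have "(\<lambda>d. 1 - Tt (Suc n) (l2 * g d)) \<longlonglongrightarrow> 1 - Tt (Suc n) (l2 * G)"
      by (intro tendsto_intros isCont_tendsto_compose[OF Tt_isCont] lim)
    moreover have "(\<lambda>d. 1 - Tt (Suc n) (l2 * g d)) \<longlonglongrightarrow> G"
      using lim unfolding gS[symmetric] by (rule LIMSEQ_Suc)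
    ultimately show ?thesis by (rule LIMSEQ_unique)
  qed
  define s where "s = l2 * G"
  have s_pos: "s > 0" using Gb b l2 unfolding s_def by simp
  have Dneg: "Dd n s < 0"
  proof (rule ccontr)
    assume "\<not> Dd n s < 0"
    then have D: "Dd n s \<ge> 0" by simp
    have "l2 * b < s" using Gb l2 unfolding s_def by simp
    then have "(1 - Tt (Suc n) (l2 * b)) / (l2 * b) < (1 - Tt (Suc n) s) / s"
      using h_incr[OF _ _ D] l2 b by auto
    also have "\<dots> = 1 / l2" using gfix s_pos l2 Gb b unfolding s_def by simp
    finally have "(1 - Tt (Suc n) (l2 * b)) / (l2 * b) < 1 / l2" .
    moreover have "(1 - Tt (Suc n) (l2 * b)) = g 1" using gS[of 0] g0 by simp
    ultimately have "g 1 / (l2 * b) < 1 / l2" by simp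
    then have "g 1 < b" using l2 b by (simp add: field_simps)
    then show False using g1 by simp
  qed
  define phi where "phi d = Ee n (l2 * g d) / g (Suc d)" for d
  define phis where "phis = Ee n s / G"
  have phis_lt: "phis < 1" using Dneg gfix Gb b unfolding phis_def Dd_def s_def by simp
  have philim: "phi \<longlonglongrightarrow> phis"
  proof -
    have "(\<lambda>d. Ee n (l2 * g d)) \<longlonglongrightarrow> Ee n s"
      unfolding Ee_def s_def by (intro tendsto_intros lim) auto
    moreover have "(\<lambda>d. g (Suc d)) \<longlonglongrightarrow> G" using lim by (rule LIMSEQ_Suc)
    ultimately show ?thesis unfolding phi_def phis_def
      using Gb b by (intro tendsto_divide) auto
  qed
  define c where "c = (1 + phis) / 2"
  have c1: "c < 1" and cphi: "phis < c" using phis_lt unfolding c_def by auto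
  have c0: "c > 0"
  proof -
    have "phis \<ge> 0" unfolding phis_def Ee_def using s_pos Gb b by simp
    then show ?thesis unfolding c_def by simp
  qed
  obtain N where N: "\<And>d. d \<ge> N \<Longrightarrow> phi d < c"
    using order_tendstoD(2)[OF philim cphi] unfolding eventually_sequentially by blast
  define x where "x d = rho d / g d" for d
  have gpos: "g d > 0" for d using gb[of d] b by simp
  have x01: "0 \<le> x d" "x d \<le> 1" for d
    unfolding x_def using rnn[of d] rle[of d] gpos[of d] by auto
  have xstep: "1 - x (Suc d) \<le> phi d * (1 - x d)" for d
  proof -
    let ?mu = "l2 * g d"
    have q: "g (Suc d) = 1 - Tt (Suc n) ?mu" by (rule gS)
    have lr: "l2 * rho d = ?mu * x d" unfolding x_def using gpos[of d] by simp
    have r: "rho (Suc d) = g (Suc d) - Pp (Suc n) ?mu + Pp (Suc n) ?mu * x d ^ Suc n"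
      unfolding rS q Tt_Suc[of "Suc n"] lr Pp_def by (simp add: power_mult_distrib)
    have "1 - x (Suc d) = Pp (Suc n) ?mu * (1 - x d ^ Suc n) / g (Suc d)"
      unfolding x_def r using gpos[of "Suc d"] by (simp add: field_simps)
    also have "\<dots> \<le> Pp (Suc n) ?mu * (real (Suc n) * (1 - x d)) / g (Suc d)"
    proof -
      have "1 - x d ^ Suc n = (1 - x d) * (\<Sum>i<Suc n. x d ^ i)" by (rule one_diff_power_eq)
      also have "\<dots> \<le> (1 - x d) * real (Suc n)"
      proof (rule mult_left_mono)
        have "(\<Sum>i<Suc n. x d ^ i) \<le> (\<Sum>i<Suc n. 1)"
          using x01[of d] by (intro sum_mono power_le_one) auto
        then show "(\<Sum>i<Suc n. x d ^ i) \<le> real (Suc n)" by simp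
      qed (use x01[of d] in simp)
      finally show ?thesis using gpos[of "Suc d"] Pp_nonneg[of ?mu "Suc n"] l2 gnn[of d]
        by (intro divide_right_mono mult_left_mono) (auto simp: mult.commute)
    qed
    also have "\<dots> = phi d * (1 - x d)"
      unfolding phi_def Pp_Ee[symmetric] by simp
    finally show ?thesis .
  qed
  have xit: "1 - x (N + j) \<le> c ^ j" for j
  proof (induction j)
    case 0 then show ?case using x01[of N] by simp
  next
    case (Suc j)
    have "1 - x (Suc (N + j)) \<le> phi (N + j) * (1 - x (N + j))" by (rule xstep)
    also have "\<dots> \<le> c * c ^ j"
      using N[of "N + j"] Suc x01[of "N + j"] c0
      by (intro mult_mono) (auto simp: phi_def Ee_def intro!: divide_nonneg_pos gpos)
    finally show ?case by simp
  qed
  obtain j where j: "c ^ j < 1 - b / g 1"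
    using real_arch_pow_inv[OF _ c1, of "1 - b / g 1"] g1 b by (auto simp: field_simps)
  have "x (N + j + 1) \<ge> b / g 1"
  proof -
    have "1 - x (N + (j + 1)) \<le> c ^ (j + 1)" by (rule xit)
    also have "\<dots> \<le> c ^ j" using c0 c1 by (simp add: power_le_one mult_left_le_one_le)
    finally show ?thesis using j by simp
  qed
  then have "rho (N + j + 1) \<ge> b / g 1 * g (N + j + 1)"
    unfolding x_def using gpos[of "N+j+1"] by (simp add: field_simps)
  moreover have "b / g 1 * g (N + j + 1) \<ge> b / g 1 * g 1"
    using inc b gpos[of 1] by (intro mult_left_mono) (auto simp: incseq_def)
  ultimately have "rho (N + j + 1) \<ge> b" using gpos[of 1] by simp
  then show ?thesis by blast
qed


definition shN :: "(label \<Rightarrow> 'a) \<Rightarrow> nat \<Rightarrow> label \<Rightarrow> 'a" where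
  "shN N i = (\<lambda>v. N (v @ [i]))"

definition shD :: "label set \<Rightarrow> nat \<Rightarrow> label set" where
  "shD D i = {v. v @ [i] \<in> D}"

lemma alive_snoc: "alive N (v @ [i]) \<longleftrightarrow> i < N [] \<and> alive (shN N i) v"
  by (induction v) (auto simp: shN_def)

lemma Cons_eq_snoc: "j # w = v @ [i] \<longleftrightarrow> (v = [] \<and> j = i \<and> w = []) \<or> (\<exists>v'. v = j # v' \<and> w = v' @ [i])"
  by (cases v) auto


lemma hth_0: "has_tree_height N k 0 D \<longleftrightarrow> [] \<notin> D"
proof
  assume "has_tree_height N k 0 D"
  then obtain S where "[] \<in> S" "\<forall>v\<in>S. alive N v \<and> length v \<le> 0 \<and> (\<forall>u. suffix u v \<longrightarrow> u \<notin> D)"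
    unfolding has_tree_height_def by blast
  then show "[] \<notin> D" by auto
next
  assume "[] \<notin> D"
  then show "has_tree_height N k 0 D"
    unfolding has_tree_height_def by (intro exI[of _ "{[]}"]) auto
qed

lemma hth_mono: "has_tree_height N k d D \<Longrightarrow> D' \<subseteq> D \<Longrightarrow> has_tree_height N k d D'"
  unfolding has_tree_height_def by (elim exE, rule_tac x=S in exI) auto


lemma hth_Suc:
  assumes D: "[] \<notin> D"
  shows "has_tree_height N k (Suc d) D \<longleftrightarrow>
     k - 1 \<le> card {i. i < N [] \<and> has_tree_height (shN N i) k d (shD D i)}"
    (is "?L \<longleftrightarrow> k - 1 \<le> card ?G")
proof
  assume ?L
  then obtain S where S0: "[] \<in> S"
    and S1: "\<forall>v\<in>S. alive N v \<and> length v \<le> Suc d \<and> (\<forall>u. suffix u v \<longrightarrow> u \<notin> D)"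
    and S2: "\<forall>i v. i # v \<in> S \<longrightarrow> v \<in> S"
    and S3: "\<forall>v\<in>S. length v < Suc d \<longrightarrow> card {i. i # v \<in> S} = k - 1"
    unfolding has_tree_height_def by (elim exE conjE) simp
  have cJ: "card {i. [i] \<in> S} = k - 1" using S3 S0 by auto
  have sub: "{i. [i] \<in> S} \<subseteq> ?G"
  proof
    fix i assume i: "i \<in> {i. [i] \<in> S}"
    then have "alive N [i]" using S1 by auto
    then have iN: "i < N []" by simp
    define Si where "Si = {v. v @ [i] \<in> S}"
    have "has_tree_height (shN N i) k d (shD D i)"
      unfolding has_tree_height_def
    proof (intro exI[of _ Si] conjI allI ballI impI)
      show "[] \<in> Si" using i unfolding Si_def by simp
    next
      fix v assume v: "v \<in> Si"
      then have v': "v @ [i] \<in> S" unfolding Si_def by simp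
      show "alive (shN N i) v" using S1 v' alive_snoc by blast
      show "length v \<le> d" using S1 v' by auto
      fix u assume "suffix u v"
      then have "suffix (u @ [i]) (v @ [i])" by simp
      then show "u \<notin> shD D i" using S1 v' unfolding shD_def by blast
    next
      fix j v assume "j # v \<in> Si"
      then have "j # (v @ [i]) \<in> S" unfolding Si_def by simp
      then show "v \<in> Si" using S2 unfolding Si_def by blast
    next
      fix v assume v: "v \<in> Si" "length v < d"
      then have "card {j. j # (v @ [i]) \<in> S} = k - 1" using S3 unfolding Si_def by auto
      then show "card {j. j # v \<in> Si} = k - 1" unfolding Si_def by simp
    qed
    then show "i \<in> ?G" using iN by simp
  qed
  have "finite ?G" by (rule finite_subset[of _ "{..<N []}"]) auto
  then show "k - 1 \<le> card ?G" using card_mono[OF _ sub] cJ by simp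
next
  assume c: "k - 1 \<le> card ?G"
  obtain J where J: "J \<subseteq> ?G" "card J = k - 1" "finite J"
    using obtain_subset_with_card_n[OF c] by metis
  have "\<forall>i\<in>J. \<exists>S. [] \<in> S \<and>
          (\<forall>v\<in>S. alive (shN N i) v \<and> length v \<le> d \<and> (\<forall>u. suffix u v \<longrightarrow> u \<notin> shD D i)) \<and>
          (\<forall>j v. j # v \<in> S \<longrightarrow> v \<in> S) \<and>
          (\<forall>v\<in>S. length v < d \<longrightarrow> card {j. j # v \<in> S} = k - 1)"
  proof
    fix i assume "i \<in> J"
    then have "has_tree_height (shN N i) k d (shD D i)" using J(1) by auto
    then show "\<exists>S. [] \<in> S \<and>
          (\<forall>v\<in>S. alive (shN N i) v \<and> length v \<le> d \<and> (\<forall>u. suffix u v \<longrightarrow> u \<notin> shD D i)) \<and>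
          (\<forall>j v. j # v \<in> S \<longrightarrow> v \<in> S) \<and>
          (\<forall>v\<in>S. length v < d \<longrightarrow> card {j. j # v \<in> S} = k - 1)"
      unfolding has_tree_height_def .
  qed
  from bchoice[OF this] obtain SS where SS0: "\<forall>i\<in>J. [] \<in> SS i \<and>
          (\<forall>v\<in>SS i. alive (shN N i) v \<and> length v \<le> d \<and> (\<forall>u. suffix u v \<longrightarrow> u \<notin> shD D i)) \<and>
          (\<forall>j v. j # v \<in> SS i \<longrightarrow> v \<in> SS i) \<and>
          (\<forall>v\<in>SS i. length v < d \<longrightarrow> card {j. j # v \<in> SS i} = k - 1)"
    by (elim exE) simp
  note SS = bspec[OF SS0]
  have SSa: "i \<in> J \<Longrightarrow> [] \<in> SS i" for i using SS[of i] by blast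
  have SSd: "i \<in> J \<Longrightarrow> v \<in> SS i \<Longrightarrow> length v < d \<Longrightarrow> card {j. j # v \<in> SS i} = k - 1" for i v
    using SS[of i] by blast
  have JN: "i \<in> J \<Longrightarrow> i < N []" for i using J(1) by auto
  define S where "S = insert [] {v @ [i] |v i. i \<in> J \<and> v \<in> SS i}"
  have memS: "w @ [i] \<in> S \<longleftrightarrow> i \<in> J \<and> w \<in> SS i" for w i
    unfolding S_def by auto
  show ?L unfolding has_tree_height_def
  proof (intro exI[of _ S] conjI)
    show "[] \<in> S" unfolding S_def by simp
  next
    show "\<forall>w\<in>S. alive N w \<and> length w \<le> Suc d \<and> (\<forall>u. suffix u w \<longrightarrow> u \<notin> D)"
    proof
    fix w assume w: "w \<in> S"
    show "alive N w \<and> length w \<le> Suc d \<and> (\<forall>u. suffix u w \<longrightarrow> u \<notin> D)"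
    proof (cases "w = []")
      case True then show ?thesis using D by simp
    next
      case False
      then obtain v i where wv: "w = v @ [i]" by (metis rev_exhaust)
      then have vi: "i \<in> J" "v \<in> SS i" using w memS by auto
      have "alive N w" unfolding wv alive_snoc using vi SS JN by blast
      moreover have "length w \<le> Suc d" using vi SS wv by auto
      moreover have "\<forall>u. suffix u w \<longrightarrow> u \<notin> D"
        using vi SS D unfolding wv shD_def by auto
      ultimately show ?thesis by blast
    qed
    qed
  next
    show "\<forall>j w. j # w \<in> S \<longrightarrow> w \<in> S"
    proof (intro allI impI)
    fix j w assume jw: "j # w \<in> S"
    then obtain v i where e: "j # w = v @ [i]" and vi: "i \<in> J" "v \<in> SS i" unfolding S_def by auto
    show "w \<in> S"
    proof (cases v)
      case Nil then show ?thesis using e unfolding S_def by simp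
    next
      case (Cons j' v')
      then have "w = v' @ [i]" "j' = j" using e by auto
      moreover have "v' \<in> SS i" using SS[OF vi(1)] vi(2) Cons by blast
      ultimately show ?thesis using memS vi by simp
    qed
    qed
  next
    show "\<forall>w\<in>S. length w < Suc d \<longrightarrow> card {j. j # w \<in> S} = k - 1"
    proof (intro ballI impI)
    fix w assume w: "w \<in> S" "length w < Suc d"
    show "card {j. j # w \<in> S} = k - 1"
    proof (cases "w = []")
      case True
      have "[j] \<in> S \<longleftrightarrow> j \<in> J" for j using memS[of "[]" j] SSa[of j] by auto
      then have "{j. [j] \<in> S} = J" by auto
      then show ?thesis using True J by simp
    next
      case False
      then obtain v i where wv: "w = v @ [i]" by (metis rev_exhaust)
      then have vi: "i \<in> J" "v \<in> SS i" using w memS by auto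
      have "{j. j # w \<in> S} = {j. j # v \<in> SS i}"
        using memS[of "_ # v" i] vi unfolding wv by auto
      moreover have "length v < d" using w wv by simp
      ultimately show ?thesis using SSd[OF vi] by simp
    qed
    qed
  qed
qed

definition Gs :: "(label \<Rightarrow> nat) \<Rightarrow> nat \<Rightarrow> nat \<Rightarrow> label set \<Rightarrow> nat set" where
  "Gs N k d D = {i. i < N [] \<and> has_tree_height (shN N i) k d (shD D i)}"

lemma Gs_finite: "finite (Gs N k d D)"
  by (rule finite_subset[of _ "{..<N []}"]) (auto simp: Gs_def)

lemma R_0: "\<not> R_ev_del N k 0 D"
proof
  assume R: "R_ev_del N k 0 D"
  then have "[] \<notin> D" unfolding R_ev_del_def using hth_0 by blast
  then have "has_tree_height N k 0 (insert [] D)" using R unfolding R_ev_del_def by simp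
  then show False using hth_0 by blast
qed

lemma shD_insert: "shD (insert (v @ [i]) D) j = (if j = i then insert v (shD D i) else shD D j)"
  by (auto simp: shD_def)

lemma R_Suc:
  assumes D: "[] \<notin> D" and k: "k \<ge> 2"
  shows "R_ev_del N k (Suc d) D \<longleftrightarrow> k \<le> card (Gs N k d D) \<or>
     (k - 1 \<le> card (Gs N k d D) \<and> (\<forall>i\<in>Gs N k d D. R_ev_del (shN N i) k d (shD D i)))"
proof -
  let ?G = "Gs N k d D"
  have ins: "Gs N k d (insert (v @ [i]) D) = (if has_tree_height (shN N i) k d (insert v (shD D i)) \<and> i < N []
      then insert i (?G - {i}) else ?G - {i})" for v i
    unfolding Gs_def shD_insert by auto
  have hins: "has_tree_height N k (Suc d) (insert (v @ [i]) D) \<longleftrightarrow>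
      k - 1 \<le> card (Gs N k d (insert (v @ [i]) D))" for v i
    using hth_Suc[of "insert (v @ [i]) D" N k d] D unfolding Gs_def by simp
  have h0: "has_tree_height N k (Suc d) D \<longleftrightarrow> k - 1 \<le> card ?G"
    using hth_Suc[OF D] unfolding Gs_def by simp
  show ?thesis
  proof
    assume R: "R_ev_del N k (Suc d) D"
    then have c: "k - 1 \<le> card ?G" using h0 unfolding R_ev_del_def by simp
    show "k \<le> card ?G \<or> (k - 1 \<le> card ?G \<and> (\<forall>i\<in>?G. R_ev_del (shN N i) k d (shD D i)))"
    proof (cases "k \<le> card ?G")
      case False
      have "R_ev_del (shN N i) k d (shD D i)" if i: "i \<in> ?G" for i
        unfolding R_ev_del_def
      proof (intro conjI allI impI)
        show "has_tree_height (shN N i) k d (shD D i)" using i unfolding Gs_def by simp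
        fix v assume v: "alive (shN N i) v \<and> length v = d \<and> v \<notin> shD D i"
        have iN: "i < N []" using i unfolding Gs_def by simp
        have "alive N (v @ [i]) \<and> length (v @ [i]) = Suc d \<and> v @ [i] \<notin> D"
          using v iN alive_snoc[of N v i] unfolding shD_def by simp
        then have "has_tree_height N k (Suc d) (insert (v @ [i]) D)"
          using R unfolding R_ev_del_def by blast
        then have c2: "k - 1 \<le> card (Gs N k d (insert (v @ [i]) D))" using hins by simp
        show "has_tree_height (shN N i) k d (insert v (shD D i))"
        proof (rule ccontr)
          assume "\<not> ?thesis"
          then have "Gs N k d (insert (v @ [i]) D) = ?G - {i}" using ins[of v i] by simp
          moreover have "card (?G - {i}) = card ?G - 1" using i Gs_finite by simp
          ultimately show False using c2 False k by simp
        qed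
      qed
      then show ?thesis using c by blast
    qed simp
  next
    assume A: "k \<le> card ?G \<or> (k - 1 \<le> card ?G \<and> (\<forall>i\<in>?G. R_ev_del (shN N i) k d (shD D i)))"
    have c: "k - 1 \<le> card ?G" using A by auto
    show "R_ev_del N k (Suc d) D"
      unfolding R_ev_del_def
    proof (intro conjI allI impI)
      show "has_tree_height N k (Suc d) D" using h0 c by simp
      fix w assume w: "alive N w \<and> length w = Suc d \<and> w \<notin> D"
      then have "w \<noteq> []" by auto
      then obtain v i where wv: "w = v @ [i]" by (metis rev_exhaust)
      have vi: "alive (shN N i) v" "length v = d" "v \<notin> shD D i" "i < N []"
        using w alive_snoc[of N v i] unfolding wv shD_def by auto
      have sub1: "?G - {i} \<subseteq> Gs N k d (insert (v @ [i]) D)" using ins[of v i] by auto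
      have fin: "finite (Gs N k d (insert (v @ [i]) D))" by (rule Gs_finite)
      have "k - 1 \<le> card (Gs N k d (insert (v @ [i]) D))"
      proof (cases "k \<le> card ?G")
        case True
        have "card ?G - 1 \<le> card (?G - {i})" using diff_card_le_card_Diff[of "{i}" ?G] by simp
        also have "\<dots> \<le> card (Gs N k d (insert (v @ [i]) D))" by (rule card_mono[OF fin sub1])
        finally show ?thesis using True by simp
      next
        case False
        then have rob: "\<forall>i\<in>?G. R_ev_del (shN N i) k d (shD D i)" using A by simp
        have "?G \<subseteq> Gs N k d (insert (v @ [i]) D)"
        proof (cases "i \<in> ?G")
          case True
          then have "has_tree_height (shN N i) k d (insert v (shD D i))"
            using rob vi unfolding R_ev_del_def by blast
          then show ?thesis using ins[of v i] vi by auto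
        next
          case False then show ?thesis using sub1 by auto
        qed
        then show ?thesis using c card_mono[OF fin] by (meson le_trans)
      qed
      then show "has_tree_height N k (Suc d) (insert w D)" using hins wv by simp
    qed
  qed
qed

lemma Binf_child:
  assumes "B_inf N k"
  shows "k - 1 \<le> card {i. i < N [] \<and> B_inf (shN N i) k}"
proof -
  obtain S where S0: "[] \<in> S" and S1: "\<forall>v\<in>S. alive N v"
    and S2: "\<forall>i v. i # v \<in> S \<longrightarrow> v \<in> S"
    and S3: "\<forall>v\<in>S. card {i. i # v \<in> S} = k - 1"
    using assms unfolding B_inf_def by (elim exE conjE) simp
  have cJ: "card {i. [i] \<in> S} = k - 1" using S3 S0 by auto
  have sub: "{i. [i] \<in> S} \<subseteq> {i. i < N [] \<and> B_inf (shN N i) k}"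
  proof
    fix i assume i: "i \<in> {i. [i] \<in> S}"
    then have "alive N [i]" using S1 by auto
    then have iN: "i < N []" by simp
    define Si where "Si = {v. v @ [i] \<in> S}"
    have "B_inf (shN N i) k"
      unfolding B_inf_def
    proof (intro exI[of _ Si] conjI allI ballI impI)
      show "[] \<in> Si" using i unfolding Si_def by simp
    next
      fix v assume v: "v \<in> Si"
      then have v': "v @ [i] \<in> S" unfolding Si_def by simp
      show "alive (shN N i) v" using S1 v' alive_snoc by blast
    next
      fix j v assume "j # v \<in> Si"
      then have "j # (v @ [i]) \<in> S" unfolding Si_def by simp
      then show "v \<in> Si" using S2 unfolding Si_def by blast
    next
      fix v assume v: "v \<in> Si"
      then have "card {j. j # (v @ [i]) \<in> S} = k - 1" using S3 unfolding Si_def by auto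
      then show "card {j. j # v \<in> Si} = k - 1" unfolding Si_def by simp
    qed
    then show "i \<in> {i. i < N [] \<and> B_inf (shN N i) k}" using iN by simp
  qed
  have "finite {i. i < N [] \<and> B_inf (shN N i) k}" by (rule finite_subset[of _ "{..<N []}"]) auto
  then show ?thesis using card_mono[OF _ sub] cJ by simp
qed


definition PP :: "'a pmf \<Rightarrow> (label \<Rightarrow> 'a) measure" where
  "PP q = PiM UNIV (\<lambda>_. measure_pmf q)"

lemma space_PP[simp]: "space (PP q) = UNIV"
  by (simp add: PP_def space_PiM)

lemma prob_space_PP: "prob_space (PP q)"
  unfolding PP_def by (intro prob_space_PiM) (simp add: prob_space_measure_pmf)

lemma shN_measurable[measurable]: "(\<lambda>\<omega>. shN \<omega> i) \<in> measurable (PP q) (PP q)"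
  unfolding PP_def shN_def
  by (rule measurable_PiM_single') (auto simp: space_PiM intro!: measurable_component_singleton)

lemma root_measurable[measurable]: "(\<lambda>\<omega>. \<omega> []) \<in> measurable (PP q) (measure_pmf q)"
  unfolding PP_def by measurable

lemma distr_shN: "distr (PP q) (PP q) (\<lambda>\<omega>. shN \<omega> i) = PP q"
proof -
  have d: "distr (PP q) (\<Pi>\<^sub>M v\<in>UNIV. measure_pmf q) (\<lambda>\<omega>. \<lambda>v\<in>UNIV. \<omega> (v @ [i])) = (\<Pi>\<^sub>M v\<in>UNIV. measure_pmf q)"
    unfolding PP_def
    by (rule distr_PiM_reindex[where f="\<lambda>v. v @ [i]" and M="\<lambda>_. measure_pmf q", simplified])
       (auto simp: prob_space_measure_pmf inj_on_def)
  have e: "(\<lambda>\<omega>. \<lambda>v\<in>UNIV. \<omega> (v @ [i])) = (\<lambda>\<omega> v. \<omega> (v @ [i]))"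
    by (auto simp: restrict_def)
  show ?thesis using d unfolding e PP_def shN_def .
qed

lemma distr_root: "distr (PP q) (measure_pmf q) (\<lambda>\<omega>. \<omega> []) = measure_pmf q"
  unfolding PP_def by (rule distr_PiM_component) (auto simp: prob_space_measure_pmf)

definition Zv :: "nat option \<Rightarrow> (label \<Rightarrow> 'a) \<Rightarrow> (label \<Rightarrow> 'a)" where
  "Zv ox \<omega> = (case ox of None \<Rightarrow> (\<lambda>_. \<omega> []) | Some i \<Rightarrow> shN \<omega> i)"

lemma indep_coords: "prob_space.indep_vars (PP q) (\<lambda>_. measure_pmf q) (\<lambda>v \<omega>. \<omega> v) UNIV"
proof -
  interpret prob_space "PP q" by (rule prob_space_PP)
  have "distr (PP q) (\<Pi>\<^sub>M i\<in>UNIV. measure_pmf q) (\<lambda>x. \<lambda>i\<in>UNIV. x i) = PP q"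
  proof -
    have e: "(\<lambda>x::label \<Rightarrow> 'a. \<lambda>i\<in>UNIV. x i) = (\<lambda>x. x)" by (auto simp: restrict_def)
    show ?thesis unfolding e PP_def by simp
  qed
  also have "\<dots> = (\<Pi>\<^sub>M i\<in>UNIV. distr (PP q) (measure_pmf q) (\<lambda>\<omega>. \<omega> i))"
    unfolding PP_def
    by (intro PiM_cong refl distr_PiM_component[symmetric]) (auto simp: prob_space_measure_pmf)
  finally show ?thesis
    by (subst indep_vars_iff_distr_eq_PiM) (auto simp: PP_def)
qed

lemma indep_Zv: "prob_space.indep_vars (PP q) (\<lambda>_. PP q) Zv UNIV"
proof -
  interpret prob_space "PP q" by (rule prob_space_PP)
  define K where "K ox = (case ox of None \<Rightarrow> {[]} | Some i \<Rightarrow> range (\<lambda>v::label. v @ [i]))" for ox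
  have I2: "indep_vars (\<lambda>ox. PiM (K ox) (\<lambda>_. measure_pmf q)) (\<lambda>ox \<omega>. restrict (\<lambda>v. \<omega> v) (K ox)) UNIV"
  proof (rule indep_vars_restrict[OF indep_coords])
    show "disjoint_family_on K UNIV"
      unfolding disjoint_family_on_def K_def by (auto split: option.splits)
  qed auto
  define Y :: "nat option \<Rightarrow> (label \<Rightarrow> 'a) \<Rightarrow> (label \<Rightarrow> 'a)"
    where "Y ox = (case ox of None \<Rightarrow> (\<lambda>x. \<lambda>_. x []) | Some i \<Rightarrow> (\<lambda>x v. x (v @ [i])))" for ox
  have meas: "Y ox \<in> measurable (PiM (K ox) (\<lambda>_. measure_pmf q)) (PP q)" for ox
  proof (cases ox)
    case None then show ?thesis unfolding Y_def
      by (simp add: PP_def) (rule measurable_PiM_single', auto simp: space_PiM K_def intro!: measurable_component_singleton)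
  next
    case (Some i) then show ?thesis unfolding Y_def
      by (simp add: PP_def) (rule measurable_PiM_single', auto simp: space_PiM K_def intro!: measurable_component_singleton)
  qed
  have I3: "indep_vars (\<lambda>_. PP q) (\<lambda>ox \<omega>. Y ox (restrict (\<lambda>v. \<omega> v) (K ox))) UNIV"
    by (rule indep_vars_compose2[OF I2 meas])
  have e: "Y ox (restrict (\<lambda>v. \<omega> v) (K ox)) = Zv ox \<omega>" for ox and \<omega> :: "label \<Rightarrow> 'a"
    by (cases ox) (auto simp: Y_def Zv_def K_def shN_def)
  have e2: "(\<lambda>ox \<omega>. Y ox (restrict (\<lambda>v. \<omega> v) (K ox))) = Zv" by (intro ext e)
  show ?thesis using I3 unfolding e2 .
qed

lemma root_set_meas: "{\<omega>. P (\<omega> [])} \<in> sets (PP q)"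
proof -
  have "{\<omega>. P (\<omega> [])} = (\<lambda>\<omega>. \<omega> []) -` {x. P x} \<inter> space (PP q)" by auto
  also have "\<dots> \<in> sets (PP q)" by (rule measurable_sets[OF root_measurable]) simp
  finally show ?thesis .
qed

lemma prob_root: "measure (PP q) {\<omega>. cnt (\<omega> []) = n} = pmf (map_pmf cnt q) n"
proof -
  have "measure (PP q) {\<omega>. cnt (\<omega> []) = n} = measure (PP q) ((\<lambda>\<omega>. \<omega> []) -` (cnt -` {n}) \<inter> space (PP q))"
    by (auto intro!: arg_cong[where f="measure (PP q)"])
  also have "\<dots> = measure (distr (PP q) (measure_pmf q) (\<lambda>\<omega>. \<omega> [])) (cnt -` {n})"
    by (rule measure_distr[symmetric], rule root_measurable, simp)
  also have "\<dots> = pmf (map_pmf cnt q) n" unfolding distr_root by (simp add: pmf_map)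
  finally show ?thesis .
qed

lemma prob_shN: "B \<in> sets (PP q) \<Longrightarrow> measure (PP q) {\<omega>. shN \<omega> i \<in> B} = measure (PP q) B"
proof -
  assume B: "B \<in> sets (PP q)"
  have "measure (PP q) {\<omega>. shN \<omega> i \<in> B} = measure (PP q) ((\<lambda>\<omega>. shN \<omega> i) -` B \<inter> space (PP q))"
    by (auto intro!: arg_cong[where f="measure (PP q)"])
  also have "\<dots> = measure (distr (PP q) (PP q) (\<lambda>\<omega>. shN \<omega> i)) B"
    by (rule measure_distr[symmetric]) (use B in auto)
  also have "\<dots> = measure (PP q) B" unfolding distr_shN ..
  finally show ?thesis .
qed

lemma cyl_prob:
  assumes E: "E \<in> sets (PP q)" and F: "F \<in> sets (PP q)" and J: "J \<subseteq> {..<n}"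
  shows "measure (PP q) {\<omega>. cnt (\<omega> []) = n \<and> (\<forall>i<n. (i \<in> J \<longrightarrow> shN \<omega> i \<in> F) \<and> (i \<notin> J \<longrightarrow> shN \<omega> i \<notin> E))}
    = pmf (map_pmf cnt q) n * measure (PP q) F ^ card J * (1 - measure (PP q) E) ^ (n - card J)"
proof -
  interpret prob_space "PP q" by (rule prob_space_PP)
  define A where "A ox = (case ox of None \<Rightarrow> {f. cnt (f []) = n} | Some i \<Rightarrow> if i \<in> J then F else UNIV - E)" for ox
  define I where "I = insert None (Some ` {..<n})"
  have Asets: "A ox \<in> sets (PP q)" for ox
    using E F root_set_meas[where q=q and P="\<lambda>x. cnt x = n"] unfolding A_def
    by (cases ox) (auto intro: sets.compl_sets[of _ "PP q", simplified])
  have set_eq: "{\<omega>. cnt (\<omega> []) = n \<and> (\<forall>i<n. (i \<in> J \<longrightarrow> shN \<omega> i \<in> F) \<and> (i \<notin> J \<longrightarrow> shN \<omega> i \<notin> E))}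
      = (\<Inter>ox\<in>I. Zv ox -` A ox \<inter> space (PP q))"
    unfolding I_def A_def Zv_def by auto
  have "prob (\<Inter>ox\<in>I. Zv ox -` A ox \<inter> space (PP q)) = (\<Prod>ox\<in>I. prob (Zv ox -` A ox \<inter> space (PP q)))"
    by (rule indep_varsD[OF indep_Zv]) (auto simp: I_def Asets)
  also have "\<dots> = prob (Zv None -` A None \<inter> space (PP q)) * (\<Prod>i<n. prob (Zv (Some i) -` A (Some i) \<inter> space (PP q)))"
    unfolding I_def by (subst prod.insert) (auto simp: prod.reindex)
  also have "prob (Zv None -` A None \<inter> space (PP q)) = pmf (map_pmf cnt q) n"
    using prob_root[where cnt=cnt and n=n and q=q] unfolding A_def Zv_def by (simp add: vimage_def)
  also have "(\<Prod>i<n. prob (Zv (Some i) -` A (Some i) \<inter> space (PP q))) =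
      (\<Prod>i<n. if i \<in> J then prob F else prob (UNIV - E))"
  proof (rule prod.cong[OF refl])
    fix i assume "i \<in> {..<n}"
    have "prob (Zv (Some i) -` A (Some i) \<inter> space (PP q)) = prob {\<omega>. shN \<omega> i \<in> A (Some i)}"
      unfolding Zv_def by (simp add: vimage_def)
    also have "\<dots> = prob (A (Some i))" by (rule prob_shN[OF Asets])
    finally show "prob (Zv (Some i) -` A (Some i) \<inter> space (PP q)) = (if i \<in> J then prob F else prob (UNIV - E))"
      unfolding A_def by simp
  qed
  also have "\<dots> = prob F ^ card J * (1 - prob E) ^ (n - card J)"
  proof -
    have c1: "{..<n} \<inter> {x. x \<in> J} = J" using J by auto
    have c2: "card ({..<n} \<inter> - {x. x \<in> J}) = n - card J"
    proof -
      have "{..<n} \<inter> - {x. x \<in> J} = {..<n} - J" by auto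
      then show ?thesis using J by (simp add: card_Diff_subset finite_subset)
    qed
    have pc: "prob (UNIV - E) = 1 - prob E" using prob_compl[OF E] by simp
    show ?thesis unfolding prod.If_cases[OF finite_lessThan] c1 pc using c2 by simp
  qed
  finally show ?thesis unfolding set_eq by (simp add: mult.assoc)
qed

lemma cyl_meas:
  assumes E: "E \<in> sets (PP q)" and F: "F \<in> sets (PP q)"
  shows "{\<omega>. cnt (\<omega> []) = n \<and> (\<forall>i<n. (i \<in> J \<longrightarrow> shN \<omega> i \<in> F) \<and> (i \<notin> J \<longrightarrow> shN \<omega> i \<notin> E))} \<in> sets (PP q)"
proof -
  have sh: "{\<omega>. shN \<omega> i \<in> B} \<in> sets (PP q)" if "B \<in> sets (PP q)" for B i
  proof -
    have "{\<omega>. shN \<omega> i \<in> B} = (\<lambda>\<omega>. shN \<omega> i) -` B \<inter> space (PP q)" by auto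
    also have "\<dots> \<in> sets (PP q)" by (rule measurable_sets[OF shN_measurable that])
    finally show ?thesis .
  qed
  have shc: "{\<omega>. shN \<omega> i \<notin> E} \<in> sets (PP q)" for i
  proof -
    have "{\<omega>. shN \<omega> i \<notin> E} = space (PP q) - {\<omega>. shN \<omega> i \<in> E}" by auto
    then show ?thesis using sets.compl_sets[OF sh[OF E, of i]] by simp
  qed
  have "{\<omega>. cnt (\<omega> []) = n \<and> (\<forall>i<n. (i \<in> J \<longrightarrow> shN \<omega> i \<in> F) \<and> (i \<notin> J \<longrightarrow> shN \<omega> i \<notin> E))}
     = {\<omega>. cnt (\<omega> []) = n} \<inter> (\<Inter>i\<in>{..<n}. if i \<in> J then {\<omega>. shN \<omega> i \<in> F} else {\<omega>. shN \<omega> i \<notin> E})"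
    by auto
  also have "\<dots> \<in> sets (PP q)"
  proof (cases "n = 0")
    case True then show ?thesis using root_set_meas[where q=q and P="\<lambda>x. cnt x = n"] by simp
  next
    case False then show ?thesis
      using root_set_meas[where q=q and P="\<lambda>x. cnt x = n"] sh[OF F] shc
      by (intro sets.Int sets.finite_INT) auto
  qed
  finally show ?thesis .
qed

lemma poisson_series:
  assumes lam: "lam > 0"
  shows "(\<lambda>n. pmf (poisson_pmf lam) n * real (n choose j) * a ^ j * b ^ (n - j))
           sums (exp (-lam) * (lam * a) ^ j / fact j * exp (lam * b))"
proof -
  have "(\<lambda>m. (exp (-lam) * (lam * a) ^ j / fact j) * ((lam * b) ^ m /\<^sub>R fact m))
      sums ((exp (-lam) * (lam * a) ^ j / fact j) * exp (lam * b))"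
    by (intro sums_mult exp_converges)
  moreover have "(exp (-lam) * (lam * a) ^ j / fact j) * ((lam * b) ^ m /\<^sub>R fact m)
      = pmf (poisson_pmf lam) (m + j) * real ((m + j) choose j) * a ^ j * b ^ (m + j - j)" for m
  proof -
    have "real ((m + j) choose j) = fact (m + j) / (fact j * fact m)"
      using binomial_fact[of j "m + j", where 'a=real] by simp
    then show ?thesis using lam
      by (simp add: power_add power_mult_distrib divide_simps)
  qed
  ultimately have "(\<lambda>m. pmf (poisson_pmf lam) (m + j) * real ((m + j) choose j) * a ^ j * b ^ (m + j - j))
      sums (exp (-lam) * (lam * a) ^ j / fact j * exp (lam * b))" by simp
  then show ?thesis
    by (subst (asm) sums_zero_iff_shift[where n=j]) auto
qed

definition cyl :: "('a \<Rightarrow> nat) \<Rightarrow> (label \<Rightarrow> 'a) set \<Rightarrow> (label \<Rightarrow> 'a) set \<Rightarrow> nat \<Rightarrow> nat set \<Rightarrow> (label \<Rightarrow> 'a) set" where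
  "cyl cnt E F n J = {\<omega>. cnt (\<omega> []) = n \<and> (\<forall>i<n. (i \<in> J \<longrightarrow> shN \<omega> i \<in> F) \<and> (i \<notin> J \<longrightarrow> shN \<omega> i \<notin> E))}"

definition Wn :: "('a \<Rightarrow> nat) \<Rightarrow> (label \<Rightarrow> 'a) set \<Rightarrow> (label \<Rightarrow> 'a) set \<Rightarrow> nat \<Rightarrow> nat \<Rightarrow> (label \<Rightarrow> 'a) set" where
  "Wn cnt E F j n = {\<omega>. cnt (\<omega> []) = n \<and> card {i. i < cnt (\<omega> []) \<and> shN \<omega> i \<in> E} = j \<and>
      (\<forall>i<cnt (\<omega> []). shN \<omega> i \<in> E \<longrightarrow> shN \<omega> i \<in> F)}"

lemma Wn_eq:
  assumes "F \<subseteq> E"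
  shows "Wn cnt E F j n = (\<Union>J\<in>{J. J \<subseteq> {..<n} \<and> card J = j}. cyl cnt E F n J)"
proof (intro equalityI subsetI)
  fix \<omega> assume w: "\<omega> \<in> Wn cnt E F j n"
  let ?J = "{i. i < n \<and> shN \<omega> i \<in> E}"
  have "\<omega> \<in> cyl cnt E F n ?J" using w unfolding Wn_def cyl_def by auto
  moreover have "?J \<in> {J. J \<subseteq> {..<n} \<and> card J = j}" using w unfolding Wn_def by auto
  ultimately show "\<omega> \<in> (\<Union>J\<in>{J. J \<subseteq> {..<n} \<and> card J = j}. cyl cnt E F n J)" by blast
next
  fix \<omega> assume "\<omega> \<in> (\<Union>J\<in>{J. J \<subseteq> {..<n} \<and> card J = j}. cyl cnt E F n J)"
  then obtain J where J: "J \<subseteq> {..<n}" "card J = j" "\<omega> \<in> cyl cnt E F n J" by auto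
  have eq: "{i. i < n \<and> shN \<omega> i \<in> E} = J" using J assms unfolding cyl_def by auto
  show "\<omega> \<in> Wn cnt E F j n" using J eq assms unfolding Wn_def cyl_def by auto
qed

lemma Wn_prob:
  assumes E: "E \<in> sets (PP q)" and F: "F \<in> sets (PP q)" and FE: "F \<subseteq> E"
  shows "measure (PP q) (Wn cnt E F j n) =
    pmf (map_pmf cnt q) n * real (n choose j) * measure (PP q) F ^ j * (1 - measure (PP q) E) ^ (n - j)"
proof -
  let ?S = "{J. J \<subseteq> {..<n} \<and> card J = j}"
  have fin: "finite ?S" by (rule finite_subset[of _ "Pow {..<n}"]) auto
  have disj: "disjoint_family_on (cyl cnt E F n) ?S"
    unfolding disjoint_family_on_def
  proof (intro ballI impI)
    fix J J' assume JJ: "J \<in> ?S" "J' \<in> ?S" "J \<noteq> J'"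
    show "cyl cnt E F n J \<inter> cyl cnt E F n J' = {}"
    proof (rule ccontr)
      assume "cyl cnt E F n J \<inter> cyl cnt E F n J' \<noteq> {}"
      then obtain \<omega> where w: "\<omega> \<in> cyl cnt E F n J" "\<omega> \<in> cyl cnt E F n J'" by blast
      have "{i. i < n \<and> shN \<omega> i \<in> E} = J" using w(1) JJ(1) FE unfolding cyl_def by auto
      moreover have "{i. i < n \<and> shN \<omega> i \<in> E} = J'" using w(2) JJ(2) FE unfolding cyl_def by auto
      ultimately show False using JJ(3) by simp
    qed
  qed
  have "measure (PP q) (Wn cnt E F j n) = (\<Sum>J\<in>?S. measure (PP q) (cyl cnt E F n J))"
    unfolding Wn_eq[OF FE]
  proof (rule measure_finite_Union[OF fin _ disj])
    show "cyl cnt E F n ` ?S \<subseteq> sets (PP q)"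
      using cyl_meas[OF E F] unfolding cyl_def by auto
    show "emeasure (PP q) (cyl cnt E F n J) \<noteq> \<infinity>" for J
      using finite_measure.emeasure_finite[OF prob_space.finite_measure[OF prob_space_PP]] by simp
  qed
  also have "\<dots> = (\<Sum>J\<in>?S. pmf (map_pmf cnt q) n * measure (PP q) F ^ j * (1 - measure (PP q) E) ^ (n - j))"
    using cyl_prob[OF E F] unfolding cyl_def by (intro sum.cong) auto
  also have "\<dots> = real (card ?S) * (pmf (map_pmf cnt q) n * measure (PP q) F ^ j * (1 - measure (PP q) E) ^ (n - j))"
    by simp
  also have "card ?S = n choose j" using n_subsets[of "{..<n}" j] by simp
  finally show ?thesis by simp
qed

definition Wset :: "('a \<Rightarrow> nat) \<Rightarrow> (label \<Rightarrow> 'a) set \<Rightarrow> (label \<Rightarrow> 'a) set \<Rightarrow> nat \<Rightarrow> (label \<Rightarrow> 'a) set" where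
  "Wset cnt E F j = {\<omega>. card {i. i < cnt (\<omega> []) \<and> shN \<omega> i \<in> E} = j \<and>
      (\<forall>i<cnt (\<omega> []). shN \<omega> i \<in> E \<longrightarrow> shN \<omega> i \<in> F)}"

lemma Wn_meas:
  assumes E: "E \<in> sets (PP q)" and F: "F \<in> sets (PP q)" and FE: "F \<subseteq> E"
  shows "Wn cnt E F j n \<in> sets (PP q)"
proof -
  have fin: "finite {J. J \<subseteq> {..<n} \<and> card J = j}" by (rule finite_subset[of _ "Pow {..<n}"]) auto
  show ?thesis unfolding Wn_eq[OF FE]
    using cyl_meas[OF E F] fin unfolding cyl_def by (intro sets.finite_UN) auto
qed

lemma Wset_prob:
  assumes E: "E \<in> sets (PP q)" and F: "F \<in> sets (PP q)" and FE: "F \<subseteq> E"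
    and pois: "map_pmf cnt q = poisson_pmf lam" and lam: "lam > 0"
  shows "Wset cnt E F j \<in> sets (PP q)"
    "measure (PP q) (Wset cnt E F j) = exp (-(lam * measure (PP q) E)) * (lam * measure (PP q) F) ^ j / fact j"
proof -
  interpret prob_space "PP q" by (rule prob_space_PP)
  have U: "Wset cnt E F j = (\<Union>n. Wn cnt E F j n)" unfolding Wset_def Wn_def by auto
  show "Wset cnt E F j \<in> sets (PP q)" unfolding U using Wn_meas[OF E F FE] by auto
  have "(\<lambda>n. measure (PP q) (Wn cnt E F j n)) sums measure (PP q) (\<Union>n. Wn cnt E F j n)"
  proof (rule finite_measure_UNION)
    show "range (Wn cnt E F j) \<subseteq> sets (PP q)" using Wn_meas[OF E F FE] by auto
    show "disjoint_family (Wn cnt E F j)" unfolding disjoint_family_on_def Wn_def by auto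
  qed
  moreover have "(\<lambda>n. measure (PP q) (Wn cnt E F j n)) sums
      (exp (-lam) * (lam * measure (PP q) F) ^ j / fact j * exp (lam * (1 - measure (PP q) E)))"
    unfolding Wn_prob[OF E F FE] pois using poisson_series[OF lam] by simp
  ultimately have "measure (PP q) (Wset cnt E F j) =
      exp (-lam) * (lam * measure (PP q) F) ^ j / fact j * exp (lam * (1 - measure (PP q) E))"
    unfolding U using sums_unique2 by blast
  also have "\<dots> = exp (-(lam * measure (PP q) E)) * (lam * measure (PP q) F) ^ j / fact j"
  proof -
    have "exp (-lam) * exp (lam * (1 - measure (PP q) E)) = exp (-(lam * measure (PP q) E))"
      by (simp add: exp_add[symmetric] algebra_simps)
    then show ?thesis by (metis (no_types, lifting) mult.commute mult.left_commute times_divide_eq_right)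
  qed
  finally show "measure (PP q) (Wset cnt E F j) = exp (-(lam * measure (PP q) E)) * (lam * measure (PP q) F) ^ j / fact j" .
qed

definition Lset :: "('a \<Rightarrow> nat) \<Rightarrow> (label \<Rightarrow> 'a) set \<Rightarrow> nat \<Rightarrow> (label \<Rightarrow> 'a) set" where
  "Lset cnt E K = {\<omega>. card {i. i < cnt (\<omega> []) \<and> shN \<omega> i \<in> E} < K}"

lemma Lset_prob:
  assumes E: "E \<in> sets (PP q)"
    and pois: "map_pmf cnt q = poisson_pmf lam" and lam: "lam > 0"
  shows "Lset cnt E K \<in> sets (PP q)" "measure (PP q) (Lset cnt E K) = Tt K (lam * measure (PP q) E)"
proof -
  have U: "Lset cnt E K = (\<Union>j\<in>{..<K}. Wset cnt E E j)" unfolding Lset_def Wset_def by auto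
  note W = Wset_prob[OF E E subset_refl pois lam]
  show "Lset cnt E K \<in> sets (PP q)" unfolding U using W(1) by auto
  have "measure (PP q) (Lset cnt E K) = (\<Sum>j<K. measure (PP q) (Wset cnt E E j))"
    unfolding U
  proof (rule measure_finite_Union)
    show "disjoint_family_on (Wset cnt E E) {..<K}" unfolding disjoint_family_on_def Wset_def by auto
    show "emeasure (PP q) (Wset cnt E E j) \<noteq> \<infinity>" for j
      using finite_measure.emeasure_finite[OF prob_space.finite_measure[OF prob_space_PP]] by simp
  qed (use W(1) in auto)
  also have "\<dots> = Tt K (lam * measure (PP q) E)"
    unfolding Tt_def Pp_def W(2) by simp
  finally show "measure (PP q) (Lset cnt E K) = Tt K (lam * measure (PP q) E)" .
qed


definition Dm :: "nat \<Rightarrow> (label \<Rightarrow> nat \<times> bool) \<Rightarrow> label set" where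
  "Dm d \<omega> = {u. length u = d \<and> \<not> snd (\<omega> u)}"

definition Gset :: "nat \<Rightarrow> nat \<Rightarrow> (label \<Rightarrow> nat \<times> bool) set" where
  "Gset k d = {\<omega>. has_tree_height (fst \<circ> \<omega>) k d (Dm d \<omega>)}"

definition Rset :: "nat \<Rightarrow> nat \<Rightarrow> (label \<Rightarrow> nat \<times> bool) set" where
  "Rset k d = {\<omega>. R_ev_del (fst \<circ> \<omega>) k d (Dm d \<omega>)}"

lemma fst_shN: "fst \<circ> shN \<omega> i = shN (fst \<circ> \<omega>) i"
  by (auto simp: shN_def)

lemma shD_Dm: "shD (Dm (Suc d) \<omega>) i = Dm d (shN \<omega> i)"
  by (auto simp: shD_def Dm_def shN_def)

lemma Nil_Dm: "[] \<notin> Dm (Suc d) \<omega>"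
  by (simp add: Dm_def)

lemma Rset_sub: "Rset k d \<subseteq> Gset k d"
  unfolding Rset_def Gset_def R_ev_del_def by auto

lemma Gs_eq: "Gs (fst \<circ> \<omega>) k d (Dm (Suc d) \<omega>) = {i. i < fst (\<omega> []) \<and> shN \<omega> i \<in> Gset k d}"
  unfolding Gs_def Gset_def shD_Dm fst_shN[symmetric] by simp

lemma Gset_0: "Gset k 0 = {\<omega>. snd (\<omega> [])}"
  unfolding Gset_def hth_0 Dm_def by auto

lemma Rset_0: "Rset k 0 = {}"
  unfolding Rset_def using R_0 by auto

lemma Gset_Suc: "Gset k (Suc d) = UNIV - Lset fst (Gset k d) (k - 1)"
proof -
  have "\<omega> \<in> Gset k (Suc d) \<longleftrightarrow> k - 1 \<le> card {i. i < fst (\<omega> []) \<and> shN \<omega> i \<in> Gset k d}" for \<omega>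
  proof -
    have "\<omega> \<in> Gset k (Suc d) \<longleftrightarrow> k - 1 \<le> card (Gs (fst \<circ> \<omega>) k d (Dm (Suc d) \<omega>))"
      unfolding Gset_def mem_Collect_eq hth_Suc[OF Nil_Dm] Gs_def by simp
    then show ?thesis unfolding Gs_eq .
  qed
  then show ?thesis unfolding Lset_def by auto
qed

lemma Rset_Suc:
  assumes k: "k \<ge> 2"
  shows "Rset k (Suc d) = (UNIV - Lset fst (Gset k d) k) \<union> Wset fst (Gset k d) (Rset k d) (k - 1)"
proof -
  have "\<omega> \<in> Rset k (Suc d) \<longleftrightarrow> k \<le> card {i. i < fst (\<omega> []) \<and> shN \<omega> i \<in> Gset k d} \<or>
      (k - 1 \<le> card {i. i < fst (\<omega> []) \<and> shN \<omega> i \<in> Gset k d} \<and>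
        (\<forall>i\<in>{i. i < fst (\<omega> []) \<and> shN \<omega> i \<in> Gset k d}. shN \<omega> i \<in> Rset k d))" for \<omega>
  proof -
    have "\<omega> \<in> Rset k (Suc d) \<longleftrightarrow> R_ev_del (fst \<circ> \<omega>) k (Suc d) (Dm (Suc d) \<omega>)"
      unfolding Rset_def by simp
    also have "\<dots> \<longleftrightarrow> k \<le> card (Gs (fst \<circ> \<omega>) k d (Dm (Suc d) \<omega>)) \<or>
      (k - 1 \<le> card (Gs (fst \<circ> \<omega>) k d (Dm (Suc d) \<omega>)) \<and>
        (\<forall>i\<in>Gs (fst \<circ> \<omega>) k d (Dm (Suc d) \<omega>). R_ev_del (shN (fst \<circ> \<omega>) i) k d (shD (Dm (Suc d) \<omega>) i)))"
      by (rule R_Suc[OF Nil_Dm k])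
    also have "(\<lambda>i. R_ev_del (shN (fst \<circ> \<omega>) i) k d (shD (Dm (Suc d) \<omega>) i)) = (\<lambda>i. shN \<omega> i \<in> Rset k d)"
      unfolding Rset_def shD_Dm fst_shN[symmetric] by simp
    finally show ?thesis unfolding Gs_eq .
  qed
  note pw = this
  have arith: "(k \<le> c \<or> (k - 1 \<le> c \<and> P)) \<longleftrightarrow> (\<not> c < k \<or> (c = k - 1 \<and> P))" for c :: nat and P
    using k by auto
  show ?thesis
  proof (rule set_eqI)
    fix \<omega>
    have "\<omega> \<in> (UNIV - Lset fst (Gset k d) k) \<union> Wset fst (Gset k d) (Rset k d) (k - 1) \<longleftrightarrow>
      (\<not> card {i. i < fst (\<omega> []) \<and> shN \<omega> i \<in> Gset k d} < k \<or>
       (card {i. i < fst (\<omega> []) \<and> shN \<omega> i \<in> Gset k d} = k - 1 \<and>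
        (\<forall>i\<in>{i. i < fst (\<omega> []) \<and> shN \<omega> i \<in> Gset k d}. shN \<omega> i \<in> Rset k d)))"
      unfolding Lset_def Wset_def by auto
    then show "\<omega> \<in> Rset k (Suc d) \<longleftrightarrow> \<omega> \<in> (UNIV - Lset fst (Gset k d) k) \<union> Wset fst (Gset k d) (Rset k d) (k - 1)"
      unfolding pw arith by (rule sym)
  qed
qed

lemma Wset_meas:
  assumes E: "E \<in> sets (PP q)" and F: "F \<in> sets (PP q)" and FE: "F \<subseteq> E"
  shows "Wset cnt E F j \<in> sets (PP q)"
proof -
  have U: "Wset cnt E F j = (\<Union>n. Wn cnt E F j n)" unfolding Wset_def Wn_def by auto
  show ?thesis unfolding U using Wn_meas[OF E F FE] by auto
qed

lemma Lset_meas: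
  assumes E: "E \<in> sets (PP q)"
  shows "Lset cnt E K \<in> sets (PP q)"
proof -
  have U: "Lset cnt E K = (\<Union>j\<in>{..<K}. Wset cnt E E j)" unfolding Lset_def Wset_def by auto
  show ?thesis unfolding U using Wset_meas[OF E E subset_refl] by auto
qed

lemma sets_GR:
  assumes k: "k \<ge> 2"
  shows "Gset k d \<in> sets (PP q) \<and> Rset k d \<in> sets (PP q)"
proof (induction d)
  case 0
  then show ?case unfolding Gset_0 Rset_0 using root_set_meas[where q=q and P="\<lambda>x. snd x"] by simp
next
  case (Suc d)
  then have G: "Gset k d \<in> sets (PP q)" and R: "Rset k d \<in> sets (PP q)" by auto
  have G': "Gset k (Suc d) \<in> sets (PP q)"
    unfolding Gset_Suc using sets.compl_sets[OF Lset_meas[OF G]] by simp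
  have "Rset k (Suc d) \<in> sets (PP q)"
    unfolding Rset_Suc[OF k] using sets.compl_sets[OF Lset_meas[OF G]] Wset_meas[OF G R Rset_sub]
    by auto
  then show ?case using G' by simp
qed

lemma recursion:
  assumes k: "k \<ge> 2" and lam: "lam > 0" and p: "0 \<le> p" "p \<le> 1"
  defines "q \<equiv> pair_pmf (poisson_pmf lam) (bernoulli_pmf p)"
  shows "measure (PP q) (Gset k 0) = p"
    "measure (PP q) (Rset k 0) = 0"
    "measure (PP q) (Gset k (Suc d)) = 1 - Tt (k - 1) (lam * measure (PP q) (Gset k d))"
    "measure (PP q) (Rset k (Suc d)) = 1 - Tt k (lam * measure (PP q) (Gset k d))
        + exp (-(lam * measure (PP q) (Gset k d))) * (lam * measure (PP q) (Rset k d)) ^ (k - 1) / fact (k - 1)"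
proof -
  interpret prob_space "PP q" by (rule prob_space_PP)
  have pois: "map_pmf fst q = poisson_pmf lam" unfolding q_def by (rule map_fst_pair_pmf)
  have "measure (PP q) {\<omega>. snd (\<omega> []) = True} = pmf (map_pmf snd q) True"
    by (rule prob_root)
  then show "measure (PP q) (Gset k 0) = p"
    unfolding Gset_0 q_def map_snd_pair_pmf using p by simp
  show "measure (PP q) (Rset k 0) = 0" unfolding Rset_0 by simp
  have G: "Gset k d \<in> sets (PP q)" and R: "Rset k d \<in> sets (PP q)" using sets_GR[OF k] by auto
  note L1 = Lset_prob[OF G pois lam, of "k - 1"]
  show "measure (PP q) (Gset k (Suc d)) = 1 - Tt (k - 1) (lam * measure (PP q) (Gset k d))"
    unfolding Gset_Suc using prob_compl[OF L1(1)] L1(2) by simp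
  note L2 = Lset_prob[OF G pois lam, of k]
  note W = Wset_prob[OF G R Rset_sub pois lam, of "k - 1"]
  have disj: "(UNIV - Lset fst (Gset k d) k) \<inter> Wset fst (Gset k d) (Rset k d) (k - 1) = {}"
    unfolding Lset_def Wset_def using k by auto
  have "measure (PP q) (Rset k (Suc d)) = measure (PP q) (UNIV - Lset fst (Gset k d) k) +
      measure (PP q) (Wset fst (Gset k d) (Rset k d) (k - 1))"
    unfolding Rset_Suc[OF k]
    by (rule finite_measure_Union) (use sets.compl_sets[OF L2(1)] W(1) disj in auto)
  then show "measure (PP q) (Rset k (Suc d)) = 1 - Tt k (lam * measure (PP q) (Gset k d))
        + exp (-(lam * measure (PP q) (Gset k d))) * (lam * measure (PP q) (Rset k d)) ^ (k - 1) / fact (k - 1)"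
    using prob_compl[OF L2(1)] L2(2) W(2) by simp
qed

lemma beta_bound:
  assumes k: "k \<ge> 2" and lam: "lam > 0"
    and BI: "{N \<in> space (GW lam). B_inf N k} \<in> sets (GW lam)"
  shows "beta k lam \<le> 1 - Tt (k - 1) (lam * beta k lam)"
proof -
  let ?q = "poisson_pmf lam"
  have GW: "GW lam = PP ?q" unfolding GW_def PP_def ..
  interpret prob_space "PP ?q" by (rule prob_space_PP)
  define B where "B = {N :: label \<Rightarrow> nat. B_inf N k}"
  have Bs: "B \<in> sets (PP ?q)" using BI unfolding GW B_def by simp
  have bB: "beta k lam = measure (PP ?q) B" unfolding beta_def GW B_def by simp
  have pois: "map_pmf id ?q = ?q" by simp
  note L = Lset_prob[OF Bs pois lam, of "k - 1"]
  have sub: "B \<subseteq> UNIV - Lset id B (k - 1)"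
  proof
    fix N assume "N \<in> B"
    then have "k - 1 \<le> card {i. i < N [] \<and> B_inf (shN N i) k}" unfolding B_def by (intro Binf_child) simp
    then show "N \<in> UNIV - Lset id B (k - 1)" unfolding Lset_def B_def by simp
  qed
  have "measure (PP ?q) B \<le> measure (PP ?q) (UNIV - Lset id B (k - 1))"
    by (rule finite_measure_mono[OF sub]) (use sets.compl_sets[OF L(1)] in simp)
  also have "\<dots> = 1 - Tt (k - 1) (lam * measure (PP ?q) B)"
    using prob_compl[OF L(1)] L(2) by simp
  finally show ?thesis unfolding bB .
qed

theorem lemma3:
  fixes k :: nat and lam1 lam2 :: real
  assumes "k \<ge> 2" and "0 < lam1" and "lam1 < lam2"
    and "isCont (beta k) lam1"
  shows "\<exists>d::nat. r k lam2 d (beta k lam1) \<ge> beta k lam1"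
proof -
  have k: "k \<ge> 2" by fact
  obtain n where kn: "k = Suc (Suc n)" using k by (metis add_2_eq_Suc le_Suc_ex)
  define b where "b = beta k lam1"
  define q where "q = pair_pmf (poisson_pmf lam2) (bernoulli_pmf b)"
  have lam2: "lam2 > 0" using assms by simp
  have rR: "r k lam2 d b = measure (PP q) (Rset k d)" for d
    unfolding r_def MGW_def q_def PP_def[symmetric] Rset_def Dm_def by simp
  have b0: "b \<ge> 0" unfolding b_def beta_def by simp
  show ?thesis
  proof (cases "{N \<in> space (GW lam1). B_inf N k} \<in> sets (GW lam1) \<and> b \<noteq> 0")
    case False
    then have "b = 0" unfolding b_def beta_def using measure_notin_sets by blast
    moreover have "0 \<le> r k lam2 0 b" unfolding rR by simp
    ultimately show ?thesis unfolding b_def[symmetric] by auto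
  next
    case True
    then have bpos: "b > 0" using b0 by simp
    have b1: "b \<le> 1" unfolding b_def beta_def GW_def
      by (rule prob_space.prob_le_1) (rule prob_space_PiM, simp add: prob_space_measure_pmf)
    have bb: "b \<le> 1 - Tt (Suc n) (lam1 * b)"
      using beta_bound[OF k assms(2)] True unfolding b_def kn by simp
    interpret P2: prob_space "PP q" by (rule prob_space_PP)
    note rec = recursion[OF k lam2 b0 b1, folded q_def]
    have GR: "Gset k d \<in> sets (PP q)" "Rset k d \<in> sets (PP q)" for d using sets_GR[OF k] by auto
    have h1: "measure (PP q) (Gset k 0) = b" by (rule rec(1))
    have h2: "measure (PP q) (Gset k (Suc d)) = 1 - Tt (Suc n) (lam2 * measure (PP q) (Gset k d))" for d
      using rec(3)[of d] unfolding kn by simp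
    have h3: "measure (PP q) (Rset k (Suc d)) = 1 - Tt (Suc (Suc n)) (lam2 * measure (PP q) (Gset k d))
        + exp (-(lam2 * measure (PP q) (Gset k d))) * (lam2 * measure (PP q) (Rset k d)) ^ Suc n / fact (Suc n)" for d
      using rec(4)[of d] unfolding kn by simp
    have h4: "0 \<le> measure (PP q) (Rset k d)" for d by simp
    have h5: "measure (PP q) (Rset k d) \<le> measure (PP q) (Gset k d)" for d
      by (rule P2.finite_measure_mono[OF Rset_sub GR(1)])
    have h6: "measure (PP q) (Gset k d) \<le> 1" for d by (rule P2.prob_le_1)
    obtain d where "b \<le> measure (PP q) (Rset k d)"
      using analysis_main[OF assms(2) assms(3) bpos bb h1 h2 h3 h4 h5 h6] by blast
    then show ?thesis unfolding b_def[symmetric] rR[symmetric] by blast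
  qed
qed


end
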